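(* Let $1<\alpha<2$. If $\xi\in E_\alpha\setminus K_3$, then $\partial_y^3w(\xi)\neq0$. Moreover, $\partial_y^3w(P)=0$ for all $P\in K_3$.
   Context: $\mathbb{T}^2=[-\pi,\pi]^2$, $M=\mathbb{T}^2\setminus\{0\}$, $w(\xi)=\left(\sin^2(\frac{\xi_1}{2})+\sin^2(\frac{\xi_2}{2})\right)^{\frac{\alpha}{2}}$ (real analytic on $M$). $K_3=\{(\pm\frac\pi2,\pm\frac\pi2)\}$. $E_\alpha=\{\xi\in M:\det D^2w(\xi)=0\}$; at such points $D^2w(\xi)$ has rank one. For $\xi\in E_\alpha$, let $k_2(\xi)$ be a unit vector spanning the kernel of $D^2w(\xi)$ and $\partial_y=k_2(\xi)\cdot\nabla$ denote the directional derivative in that direction (so $\partial_y^3w(\xi)=\sum_{i,j,l}k_{2,i}k_{2,j}k_{2,l}\partial_{ijl}w(\xi)$). *)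

theory Defs
  imports "HOL-Analysis.Analysis"
begin

definition coord_dir :: "nat \<Rightarrow> real \<times> real" where
  "coord_dir i = (if i = 1 then (1, 0) else (0, 1))"

definition comp :: "real \<times> real \<Rightarrow> nat \<Rightarrow> real" where
  "comp v i = (if i = 1 then fst v else snd v)"

definition partial :: "nat \<Rightarrow> (real \<times> real \<Rightarrow> real) \<Rightarrow> real \<times> real \<Rightarrow> real" where
  "partial i f x = deriv (\<lambda>t. f (x + t *\<^sub>R coord_dir i)) 0"

definition w :: "real \<Rightarrow> real \<times> real \<Rightarrow> real" where
  "w \<alpha> \<xi> = ((sin (fst \<xi> / 2))\<^sup>2 + (sin (snd \<xi> / 2))\<^sup>2) powr (\<alpha> / 2)"

definition hess :: "real \<Rightarrow> real \<times> real \<Rightarrow> nat \<Rightarrow> nat \<Rightarrow> real" where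
  "hess \<alpha> \<xi> i j = partial i (partial j (w \<alpha>)) \<xi>"

definition det_hess :: "real \<Rightarrow> real \<times> real \<Rightarrow> real" where
  "det_hess \<alpha> \<xi> = hess \<alpha> \<xi> 1 1 * hess \<alpha> \<xi> 2 2 - hess \<alpha> \<xi> 1 2 * hess \<alpha> \<xi> 2 1"

definition T2 :: "(real \<times> real) set" where
  "T2 = {\<xi>. -pi \<le> fst \<xi> \<and> fst \<xi> \<le> pi \<and> -pi \<le> snd \<xi> \<and> snd \<xi> \<le> pi}"

definition M :: "(real \<times> real) set" where
  "M = T2 - {(0, 0)}"

definition E :: "real \<Rightarrow> (real \<times> real) set" where
  "E \<alpha> = {\<xi> \<in> M. det_hess \<alpha> \<xi> = 0}"

definition K3 :: "(real \<times> real) set" where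
  "K3 = {(a, b). a \<in> {pi/2, -pi/2} \<and> b \<in> {pi/2, -pi/2}}"

definition unit_kernel :: "real \<Rightarrow> real \<times> real \<Rightarrow> real \<times> real \<Rightarrow> bool" where
  "unit_kernel \<alpha> \<xi> k \<longleftrightarrow> norm k = 1 \<and>
     (\<forall>i\<in>{1,2}. (\<Sum>j\<in>{1,2}. hess \<alpha> \<xi> i j * comp k j) = 0)"

definition d3_dir :: "real \<Rightarrow> real \<times> real \<Rightarrow> real \<times> real \<Rightarrow> real" where
  "d3_dir \<alpha> k \<xi> = (\<Sum>i\<in>{1::nat,2}. \<Sum>j\<in>{1::nat,2}. \<Sum>l\<in>{1::nat,2}.
      comp k i * comp k j * comp k l * partial i (partial j (partial l (w \<alpha>))) \<xi>)"

end

theory Submission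
  imports Defs
begin

definition sS :: "real \<times> real \<Rightarrow> real" where
  "sS \<eta> = 1 - (cos (fst \<eta>) + cos (snd \<eta>)) / 2"

definition gd :: "real \<times> real \<Rightarrow> real \<times> real \<Rightarrow> real" where
  "gd \<eta> e = (sin (fst \<eta>) * fst e + sin (snd \<eta>) * snd e) / 2"
definition hdd :: "real \<times> real \<Rightarrow> real \<times> real \<Rightarrow> real \<times> real \<Rightarrow> real" where
  "hdd \<eta> e e' = (cos (fst \<eta>) * fst e * fst e' + cos (snd \<eta>) * snd e * snd e') / 2"
definition td :: "real \<times> real \<Rightarrow> real \<times> real \<Rightarrow> real \<times> real \<Rightarrow> real \<times> real \<Rightarrow> real" where
  "td \<eta> e e' e'' = - (sin (fst \<eta>) * fst e * fst e' * fst e'' + sin (snd \<eta>) * snd e * snd e' * snd e'') / 2"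

definition W1 :: "real \<Rightarrow> real \<times> real \<Rightarrow> real \<times> real \<Rightarrow> real" where
  "W1 p \<eta> e = p * sS \<eta> powr (p - 1) * gd \<eta> e"
definition W2 :: "real \<Rightarrow> real \<times> real \<Rightarrow> real \<times> real \<Rightarrow> real \<times> real \<Rightarrow> real" where
  "W2 p \<eta> e e' = p * (p - 1) * sS \<eta> powr (p - 2) * gd \<eta> e' * gd \<eta> e + p * sS \<eta> powr (p - 1) * hdd \<eta> e e'"
definition W3 :: "real \<Rightarrow> real \<times> real \<Rightarrow> real \<times> real \<Rightarrow> real \<times> real \<Rightarrow> real \<times> real \<Rightarrow> real" where
  "W3 p \<eta> e e' e'' = p * (p - 1) * (p - 2) * sS \<eta> powr (p - 3) * gd \<eta> e'' * gd \<eta> e' * gd \<eta> e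
     + p * (p - 1) * sS \<eta> powr (p - 2) * (hdd \<eta> e' e'' * gd \<eta> e + gd \<eta> e' * hdd \<eta> e e'')
     + p * (p - 1) * sS \<eta> powr (p - 2) * gd \<eta> e'' * hdd \<eta> e e'
     + p * sS \<eta> powr (p - 1) * td \<eta> e e' e''"

lemma sin_half_sq: "(sin ((x::real) / 2))\<^sup>2 = (1 - cos x) / 2"
  using cos_double_sin[of "x / 2"] by simp

lemma w_eq: "w \<alpha> \<eta> = sS \<eta> powr (\<alpha> / 2)"
proof -
  have "(sin (fst \<eta> / 2))\<^sup>2 + (sin (snd \<eta> / 2))\<^sup>2 = sS \<eta>"
    unfolding sS_def sin_half_sq by (simp add: field_simps)
  then show ?thesis unfolding w_def by simp
qed

lemma D0:
  "((\<lambda>t. sS (\<eta> + t *\<^sub>R e)) has_real_derivative gd \<eta> e) (at 0)"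
  unfolding sS_def gd_def
  by (auto intro!: derivative_eq_intros simp: field_simps)

lemma Dg:
  "((\<lambda>t. gd (\<eta> + t *\<^sub>R e'') e) has_real_derivative hdd \<eta> e e'') (at 0)"
  unfolding gd_def hdd_def
  by (auto intro!: derivative_eq_intros simp: field_simps)

lemma Dh:
  "((\<lambda>t. hdd (\<eta> + t *\<^sub>R e'') e e') has_real_derivative td \<eta> e e' e'') (at 0)"
  unfolding td_def hdd_def
  by (auto intro!: derivative_eq_intros simp: field_simps)

lemma Dpow:
  assumes "sS \<eta> > 0"
  shows "((\<lambda>t. sS (\<eta> + t *\<^sub>R e'') powr r) has_real_derivative r * sS \<eta> powr (r - 1) * gd \<eta> e'') (at 0)"
  using DERIV_fun_powr[OF D0[of \<eta> e''], of r] assms by simp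

lemma D1:
  assumes "sS \<eta> > 0"
  shows "((\<lambda>t. W1 p (\<eta> + t *\<^sub>R e'') e) has_real_derivative W2 p \<eta> e e'') (at 0)"
proof -
  have "((\<lambda>t. p * sS (\<eta> + t *\<^sub>R e'') powr (p - 1) * gd (\<eta> + t *\<^sub>R e'') e) has_real_derivative
     p * ((p - 1) * sS \<eta> powr (p - 1 - 1) * gd \<eta> e'') * gd \<eta> e + hdd \<eta> e e'' * (p * sS \<eta> powr (p - 1))) (at 0)"
    using DERIV_mult[OF DERIV_cmult[OF Dpow[OF assms, of e'' "p - 1"], of p] Dg[of \<eta> e'' e]] by simp
  then show ?thesis unfolding W1_def W2_def by (simp add: algebra_simps)
qed

lemma D2:
  assumes "sS \<eta> > 0"
  shows "((\<lambda>t. W2 p (\<eta> + t *\<^sub>R e'') e e') has_real_derivative W3 p \<eta> e e' e'') (at 0)"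
proof -
  have a: "((\<lambda>t. p * (p - 1) * sS (\<eta> + t *\<^sub>R e'') powr (p - 2) * gd (\<eta> + t *\<^sub>R e'') e' * gd (\<eta> + t *\<^sub>R e'') e) has_real_derivative
     (p * (p - 1) * ((p - 2) * sS \<eta> powr (p - 2 - 1) * gd \<eta> e'') * gd \<eta> e' + hdd \<eta> e' e'' * (p * (p - 1) * sS \<eta> powr (p - 2))) * gd \<eta> e
     + hdd \<eta> e e'' * (p * (p - 1) * sS \<eta> powr (p - 2) * gd \<eta> e')) (at 0)"
    using DERIV_mult[OF DERIV_mult[OF DERIV_cmult[OF Dpow[OF assms, of e'' "p - 2"], of "p * (p - 1)"] Dg[of \<eta> e'' e']] Dg[of \<eta> e'' e]] by simp
  have b: "((\<lambda>t. p * sS (\<eta> + t *\<^sub>R e'') powr (p - 1) * hdd (\<eta> + t *\<^sub>R e'') e e') has_real_derivative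
     p * ((p - 1) * sS \<eta> powr (p - 1 - 1) * gd \<eta> e'') * hdd \<eta> e e' + td \<eta> e e' e'' * (p * sS \<eta> powr (p - 1))) (at 0)"
    using DERIV_mult[OF DERIV_cmult[OF Dpow[OF assms, of e'' "p - 1"], of p] Dh[of \<eta> e'' e e']] by simp
  have "p - 2 - 1 = p - 3" "p - 1 - 1 = p - 2" by simp_all
  then show ?thesis using DERIV_add[OF a b] unfolding W2_def W3_def by (simp add: algebra_simps)
qed


lemma ev_pos:
  assumes "sS \<eta> > 0"
  shows "eventually (\<lambda>t. sS (\<eta> + t *\<^sub>R e) > 0) (nhds 0)"
proof -
  have "isCont (\<lambda>t. sS (\<eta> + t *\<^sub>R e)) 0" using DERIV_isCont[OF D0] .
  then have "((\<lambda>t. sS (\<eta> + t *\<^sub>R e)) \<longlongrightarrow> sS \<eta>) (at 0)" by (simp add: isCont_def)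
  hence "eventually (\<lambda>t. sS (\<eta> + t *\<^sub>R e) > 0) (at (0::real))" using assms by (rule order_tendstoD(1))
  thus ?thesis using assms by (simp add: eventually_nhds_conv_at)
qed

lemma PL1:
  assumes "sS \<zeta> > 0"
  shows "partial l (w \<alpha>) \<zeta> = W1 (\<alpha> / 2) \<zeta> (coord_dir l)"
proof -
  have "DERIV (\<lambda>t. sS (\<zeta> + t *\<^sub>R coord_dir l) powr (\<alpha> / 2)) 0 :> W1 (\<alpha> / 2) \<zeta> (coord_dir l)"
    using Dpow[OF assms, of "coord_dir l" "\<alpha> / 2"] unfolding W1_def by simp
  then show ?thesis by (simp add: partial_def w_eq DERIV_imp_deriv)
qed

lemma PL2:
  assumes "sS \<zeta> > 0"
  shows "partial j (partial l (w \<alpha>)) \<zeta> = W2 (\<alpha> / 2) \<zeta> (coord_dir l) (coord_dir j)"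
proof -
  have ev: "eventually (\<lambda>t. partial l (w \<alpha>) (\<zeta> + t *\<^sub>R coord_dir j) = W1 (\<alpha> / 2) (\<zeta> + t *\<^sub>R coord_dir j) (coord_dir l)) (nhds 0)"
    using ev_pos[OF assms, of "coord_dir j"] by (auto elim!: eventually_mono intro: PL1)
  have "partial j (partial l (w \<alpha>)) \<zeta> = deriv (\<lambda>t. partial l (w \<alpha>) (\<zeta> + t *\<^sub>R coord_dir j)) 0"
    by (rule partial_def)
  also have "\<dots> = deriv (\<lambda>t. W1 (\<alpha> / 2) (\<zeta> + t *\<^sub>R coord_dir j) (coord_dir l)) 0"
    by (rule deriv_cong_ev[OF ev refl])
  also have "\<dots> = W2 (\<alpha> / 2) \<zeta> (coord_dir l) (coord_dir j)"
    by (rule DERIV_imp_deriv[OF D1[OF assms]])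
  finally show ?thesis .
qed

lemma PL3:
  assumes "sS \<zeta> > 0"
  shows "partial i (partial j (partial l (w \<alpha>))) \<zeta> = W3 (\<alpha> / 2) \<zeta> (coord_dir l) (coord_dir j) (coord_dir i)"
proof -
  have ev: "eventually (\<lambda>t. partial j (partial l (w \<alpha>)) (\<zeta> + t *\<^sub>R coord_dir i) = W2 (\<alpha> / 2) (\<zeta> + t *\<^sub>R coord_dir i) (coord_dir l) (coord_dir j)) (nhds 0)"
    using ev_pos[OF assms, of "coord_dir i"] by (auto elim!: eventually_mono intro: PL2)
  have "partial i (partial j (partial l (w \<alpha>))) \<zeta> = deriv (\<lambda>t. partial j (partial l (w \<alpha>)) (\<zeta> + t *\<^sub>R coord_dir i)) 0"
    by (rule partial_def)
  also have "\<dots> = deriv (\<lambda>t. W2 (\<alpha> / 2) (\<zeta> + t *\<^sub>R coord_dir i) (coord_dir l) (coord_dir j)) 0"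
    by (rule deriv_cong_ev[OF ev refl])
  also have "\<dots> = W3 (\<alpha> / 2) \<zeta> (coord_dir l) (coord_dir j) (coord_dir i)"
    by (rule DERIV_imp_deriv[OF D2[OF assms]])
  finally show ?thesis .
qed


lemma cd_simps:
  "coord_dir 1 = (1, 0)" "coord_dir 2 = (0, 1)" "comp k 1 = fst k" "comp k 2 = snd k"
  "coord_dir (Suc 0) = (1, 0)" "comp k (Suc 0) = fst k"
  by (simp_all add: coord_dir_def comp_def)

lemma compact:
  fixes \<alpha> :: real and \<xi> k :: "real \<times> real"
  assumes pos: "sS \<xi> > 0"
  defines "p \<equiv> \<alpha> / 2"
  defines "a \<equiv> sin (fst \<xi>) / 2" and "b \<equiv> sin (snd \<xi>) / 2"
    and "c \<equiv> cos (fst \<xi>) / 2" and "d \<equiv> cos (snd \<xi>) / 2"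
    and "P1 \<equiv> sS \<xi> powr (\<alpha> / 2 - 1)" and "P2 \<equiv> sS \<xi> powr (\<alpha> / 2 - 2)" and "P3 \<equiv> sS \<xi> powr (\<alpha> / 2 - 3)"
    and "t \<equiv> sin (fst \<xi>) / 2 * fst k + sin (snd \<xi>) / 2 * snd k"
  shows "(\<Sum>j\<in>{1,2}. hess \<alpha> \<xi> 1 j * comp k j) = p*(p-1)*P2*a*t + p*P1*c*fst k"
    and "(\<Sum>j\<in>{1,2}. hess \<alpha> \<xi> 2 j * comp k j) = p*(p-1)*P2*b*t + p*P1*d* snd k"
    and "det_hess \<alpha> \<xi> = (p*(p-1)*P2*a*a + p*P1*c)*(p*(p-1)*P2*b*b + p*P1*d) - (p*(p-1)*P2*a*b)*(p*(p-1)*P2*a*b)"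
    and "d3_dir \<alpha> k \<xi> = p*(p-1)*(p-2)*P3*t^3 + 3*p*(p-1)*P2*t*(c*(fst k)^2 + d* (snd k)^2) - p*P1*(a*(fst k)^3 + b* (snd k)^3)"
proof -
  note h = hess_def PL2[OF pos] PL3[OF pos] W2_def W3_def gd_def hdd_def td_def cd_simps
  show "(\<Sum>j\<in>{1,2}. hess \<alpha> \<xi> 1 j * comp k j) = p*(p-1)*P2*a*t + p*P1*c*fst k"
    unfolding assms(2-) by (simp add: h algebra_simps; (simp add: field_simps)?)
  show "(\<Sum>j\<in>{1,2}. hess \<alpha> \<xi> 2 j * comp k j) = p*(p-1)*P2*b*t + p*P1*d* snd k"
    unfolding assms(2-) by (simp add: h algebra_simps; (simp add: field_simps)?)
  show "det_hess \<alpha> \<xi> = (p*(p-1)*P2*a*a + p*P1*c)*(p*(p-1)*P2*b*b + p*P1*d) - (p*(p-1)*P2*a*b)*(p*(p-1)*P2*a*b)"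
    unfolding assms(2-) det_hess_def by (simp add: h algebra_simps; (simp add: field_simps)?)
  show "d3_dir \<alpha> k \<xi> = p*(p-1)*(p-2)*P3*t^3 + 3*p*(p-1)*P2*t*(c*(fst k)^2 + d* (snd k)^2) - p*P1*(a*(fst k)^3 + b* (snd k)^3)"
    unfolding assms(2-) d3_dir_def by (simp add: h algebra_simps power2_eq_square power3_eq_cube; (simp add: field_simps)?)
qed


lemma poly1:
  fixes m n :: real
  assumes "m \<ge> 0" "n \<ge> 0" "m > 0 \<or> n > 0"
  defines "X \<equiv> 1 + m" and "Y \<equiv> 1 + n"
  shows "(X^2*Y + X*Y^2 - X - Y)^2 < (2*X*Y - X - Y) * (X^4*Y + X*Y^4 - X - Y)"
proof -
  have e: "(2*X*Y - X - Y) * (X^4*Y + X*Y^4 - X - Y) - (X^2*Y + X*Y^2 - X - Y)^2 =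
    2*n^3+3*n^4+n^5+2*m*n^2+10*m*n^3+11*m*n^4+3*m*n^5+2*m^2*n+2*m^2*n^2+6*m^2*n^3
    +2*m^2*n^5+2*m^3+10*m^3*n+6*m^3*n^2+14*m^3*n^3+3*m^4+11*m^4*n+m^5+3*m^5*n+2*m^5*n^2
    + 8*m^2*n^2*(m-n)^2"
    unfolding X_def Y_def by algebra
  have p: "0 < 2*n^3 + 2*m^3" using assms(1-3)
    by (metis add_nonneg_pos add_pos_nonneg mult_pos_pos zero_less_numeral zero_less_power zero_le_power mult_nonneg_nonneg zero_le_numeral)
  have "0 \<le> 3*n^4+n^5+2*m*n^2+10*m*n^3+11*m*n^4+3*m*n^5+2*m^2*n+2*m^2*n^2+6*m^2*n^3
    +2*m^2*n^5+10*m^3*n+6*m^3*n^2+14*m^3*n^3+3*m^4+11*m^4*n+m^5+3*m^5*n+2*m^5*n^2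
    + 8*m^2*n^2*(m-n)^2"
    using assms(1,2) by (intro add_nonneg_nonneg mult_nonneg_nonneg zero_le_power2 zero_le_power; simp)
  with p e show ?thesis by simp
qed

lemma poly2:
  fixes m n :: real
  assumes "m \<ge> 0" "n > 0"
  defines "X \<equiv> - (1 + m)" and "Y \<equiv> 1 + m + n"
  shows "(X^2*Y + X*Y^2 - X - Y)^2 < (2*X*Y - X - Y) * (X^4*Y + X*Y^4 - X - Y)"
proof -
  have e: "(2*X*Y - X - Y) * (X^4*Y + X*Y^4 - X - Y) - (X^2*Y + X*Y^2 - X - Y)^2 =
    8*n + 20*n^2 + 22*n^3 + 13*n^4 + 3*n^5 + 40*m*n + 96*m*n^2 + 90*m*n^3 + 36*m*n^4 + 5*m*n^5
    + 92*m^2*n + 190*m^2*n^2 + 132*m^2*n^3 + 33*m^2*n^4 + 2*m^2*n^5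
    + 120*m^3*n + 188*m^3*n^2 + 84*m^3*n^3 + 10*m^3*n^4 + 90*m^4*n + 92*m^4*n^2 + 20*m^4*n^3
    + 36*m^5*n + 18*m^5*n^2 + 6*m^6*n"
    unfolding X_def Y_def by algebra
  have "0 \<le> 20*n^2 + 22*n^3 + 13*n^4 + 3*n^5 + 40*m*n + 96*m*n^2 + 90*m*n^3 + 36*m*n^4 + 5*m*n^5
    + 92*m^2*n + 190*m^2*n^2 + 132*m^2*n^3 + 33*m^2*n^4 + 2*m^2*n^5
    + 120*m^3*n + 188*m^3*n^2 + 84*m^3*n^3 + 10*m^3*n^4 + 90*m^4*n + 92*m^4*n^2 + 20*m^4*n^3
    + 36*m^5*n + 18*m^5*n^2 + 6*m^6*n"
    using assms(1,2) by (intro add_nonneg_nonneg mult_nonneg_nonneg zero_le_power2 zero_le_power; simp)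
  with e assms(2) show ?thesis by simp
qed


lemma inv_mono_aux:
  fixes Y R :: real
  assumes "1 \<le> Y" "Y \<le> R"
  shows "Y - 1/Y \<le> R - 1/R"
proof -
  have "1/R \<le> 1/Y" using assms by (simp add: divide_left_mono)  
  then show ?thesis using assms by linarith
qed

lemma POLY:
  fixes X Y :: real
  assumes X: "\<bar>X\<bar> \<ge> 1" and Y: "\<bar>Y\<bar> \<ge> 1" and W: "X - 1/X + Y - 1/Y > 0"
  shows "(X^2*Y + X*Y^2 - X - Y)^2 < (2*X*Y - X - Y) * (X^4*Y + X*Y^4 - X - Y)"
proof -
  have neg: "Z - 1/Z \<le> 0" if "Z \<le> -1" for Z :: real
  proof -
    have "-1 \<le> 1/Z" using that by (simp add: le_divide_eq)
    then show ?thesis using that by linarith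
  qed
  have mixed: "(X^2*Y + X*Y^2 - X - Y)^2 < (2*X*Y - X - Y) * (X^4*Y + X*Y^4 - X - Y)"
    if "X \<le> -1" "Y \<ge> 1" "X - 1/X + Y - 1/Y > 0" for X Y :: real
  proof -
    have "Y > -X"
    proof (rule ccontr)
      assume "\<not> Y > -X"
      then have "Y - 1/Y \<le> (-X) - 1/(-X)" using inv_mono_aux[of Y "-X"] that by linarith
      then show False using that by simp
    qed
    define m where "m = -X - 1"
    define n where "n = Y + X"
    have "m \<ge> 0" "n > 0" using that \<open>Y > -X\<close> unfolding m_def n_def by linarith+
    from poly2[OF this] have "X = - (1 + m)" "Y = 1 + m + n" unfolding m_def n_def by simp_all
    then show ?thesis using poly2[OF \<open>m \<ge> 0\<close> \<open>n > 0\<close>] by simp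
  qed
  show ?thesis
  proof (cases "X \<ge> 1")
    case True
    show ?thesis
    proof (cases "Y \<ge> 1")
      case True
      define m where "m = X - 1"
      define n where "n = Y - 1"
      have "m \<ge> 0" "n \<ge> 0" using \<open>X \<ge> 1\<close> \<open>Y \<ge> 1\<close> unfolding m_def n_def by simp_all
      moreover have "m > 0 \<or> n > 0"
      proof (rule ccontr)
        assume "\<not> (m > 0 \<or> n > 0)"
        then have "X = 1" "Y = 1" using \<open>m \<ge> 0\<close> \<open>n \<ge> 0\<close> unfolding m_def n_def by linarith+
        then show False using W by simp
      qed
      ultimately show ?thesis using poly1[of m n] unfolding m_def n_def by simp
    next
      case False
      then have "Y \<le> -1" using Y by linarith
      have "(Y^2*X + Y*X^2 - Y - X)^2 < (2*Y*X - Y - X) * (Y^4*X + Y*X^4 - Y - X)"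
        using mixed[of Y X] \<open>Y \<le> -1\<close> True W by linarith
      then show ?thesis by (simp add: algebra_simps)
    qed
  next
    case False
    then have "X \<le> -1" using X by linarith
    show ?thesis
    proof (cases "Y \<ge> 1")
      case True
      then show ?thesis using mixed[of X Y] \<open>X \<le> -1\<close> W by linarith
    next
      case False
      then have "Y \<le> -1" using Y by linarith
      then show ?thesis using neg[of X] neg[of Y] \<open>X \<le> -1\<close> W by linarith
    qed
  qed
qed

lemma CI:
  fixes a2 b2 c d :: real
  assumes c: "c \<noteq> 0" and d: "d \<noteq> 0" and ha: "a2 = 1/4 - c^2" "a2 \<ge> 0"
    and hb: "b2 = 1/4 - d^2" "b2 \<ge> 0" and W: "a2/c + b2/d > 0"
  shows "(a2/c + b2/d)^2 < (1 - c - d) * (a2^2/c^3 + b2^2/d^3 + 2*(a2/c + b2/d))"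
proof -
  define X where "X = 1/(2*c)"
  define Y where "Y = 1/(2*d)"
  have X0: "X \<noteq> 0" and Y0: "Y \<noteq> 0" using c d unfolding X_def Y_def by simp_all
  have cX: "c = 1/(2*X)" unfolding X_def using c by simp
  have dY: "d = 1/(2*Y)" unfolding Y_def using d by simp
  have "c^2 \<le> (1/2)^2" using ha by (simp add: power2_eq_square)
  then have "\<bar>c\<bar> \<le> 1/2" using abs_le_square_iff[of c "1/2"] by simp
  then have X1: "\<bar>X\<bar> \<ge> 1" using c unfolding X_def by (simp add: abs_divide le_divide_eq)
  have "d^2 \<le> (1/2)^2" using hb by (simp add: power2_eq_square)
  then have "\<bar>d\<bar> \<le> 1/2" using abs_le_square_iff[of d "1/2"] by simp
  then have Y1: "\<bar>Y\<bar> \<ge> 1" using d unfolding Y_def by (simp add: abs_divide le_divide_eq)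
  have e0: "a2/c + b2/d = (X - 1/X + Y - 1/Y)/2"
    unfolding ha hb cX dY using X0 Y0 by (simp add: field_simps power2_eq_square)
  have e1: "a2/c + b2/d = (X^2*Y + X*Y^2 - X - Y)/(2*X*Y)"
    unfolding ha hb cX dY using X0 Y0 by (simp add: field_simps power2_eq_square)
  have e2: "1 - c - d = (2*X*Y - X - Y)/(2*X*Y)"
    unfolding cX dY using X0 Y0 by (simp add: field_simps)
  have e3: "a2^2/c^3 + b2^2/d^3 + 2*(a2/c + b2/d) = (X^4*Y + X*Y^4 - X - Y)/(2*X*Y)"
    unfolding ha hb cX dY using X0 Y0 by (simp add: field_simps power2_eq_square power3_eq_cube power4_eq_xxxx)
  have P: "(X^2*Y + X*Y^2 - X - Y)^2 < (2*X*Y - X - Y) * (X^4*Y + X*Y^4 - X - Y)"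
    using POLY[OF X1 Y1] W e0 by simp
  have pos: "(2*X*Y)^2 > 0" using X0 Y0 by simp
  have "(X^2*Y + X*Y^2 - X - Y)^2 / (2*X*Y)^2 < (2*X*Y - X - Y) * (X^4*Y + X*Y^4 - X - Y) / (2*X*Y)^2"
    using divide_strict_right_mono[OF P pos] .
  moreover have "(a2/c + b2/d)^2 = (X^2*Y + X*Y^2 - X - Y)^2 / (2*X*Y)^2"
    by (simp add: e1 power_divide)
  moreover have "(1 - c - d) * (a2^2/c^3 + b2^2/d^3 + 2*(a2/c + b2/d)) = (2*X*Y - X - Y) * (X^4*Y + X*Y^4 - X - Y) / (2*X*Y)^2"
    by (simp only: e2 e3) (simp add: power2_eq_square)
  ultimately show ?thesis by simp
qed

lemma ALG1:
  fixes q S a b c d k1 k2 t :: real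
  assumes q: "0 < q" "q < 1/2" and S: "S > 0" "S = 1 - c - d"
    and ac: "a^2 + c^2 = 1/4" and bd: "b^2 + d^2 = 1/4"
    and nK: "\<not> (c = 0 \<and> d = 0)" and k: "k1^2 + k2^2 = 1"
    and ker1: "S*c*k1 = q*t*a" and ker2: "S*d*k2 = q*t*b"
    and det: "S*c*d = q*(a^2*d + b^2*c)" and tdef: "t = a*k1 + b*k2"
  shows "q*(1+q)*t^3 - 3*q*S*t*(c*k1^2 + d*k2^2) - S^2*(a*k1^3 + b*k2^3) \<noteq> 0"
proof -
  have t0: "t \<noteq> 0"
  proof
    assume h0: "t = 0"
    then have ck: "c*k1 = 0" using ker1 S(1) by simp
    have dk: "d*k2 = 0" using ker2 S(1) h0 by simp
    have ab: "a*k1 + b*k2 = 0" using h0 tdef by simp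
    show False
    proof (cases "k1 = 0")
      case True
      then have "k2^2 = 1" using k by simp
      then have "k2 \<noteq> 0" by auto
      then have "d = 0" "b = 0" using dk ab True by auto
      then show False using bd by simp
    next
      case False
      then have "c = 0" using ck by simp
      then have "a^2 = 1/4" using ac by simp
      then have "a \<noteq> 0" by auto
      show False
      proof (cases "k2 = 0")
        case True then show False using ab \<open>a \<noteq> 0\<close> \<open>k1 \<noteq> 0\<close> by simp
      next
        case False then have "d = 0" using dk by simp
        then show False using nK \<open>c = 0\<close> by simp
      qed
    qed
  qed
  have c0: "c \<noteq> 0"
  proof
    assume "c = 0"
    then have "a^2 = 1/4" using ac by simp
    have "q*(a^2*d) = 0" using det \<open>c = 0\<close> by simp
    then have "d = 0" using q \<open>a^2 = 1/4\<close> by simp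
    then show False using nK \<open>c = 0\<close> by simp
  qed
  have d0: "d \<noteq> 0"
  proof
    assume "d = 0"
    then have "b^2 = 1/4" using bd by simp
    have "q*(b^2*c) = 0" using det \<open>d = 0\<close> by simp
    then have "c = 0" using q \<open>b^2 = 1/4\<close> by simp
    then show False using nK \<open>d = 0\<close> by simp
  qed
  have k1e: "k1 = q*t*a/(S*c)" using ker1 S(1) c0 by (simp add: field_simps)
  have k2e: "k2 = q*t*b/(S*d)" using ker2 S(1) d0 by (simp add: field_simps)
  define R where "R = (a^2)^2/c^3 + (b^2)^2/d^3"
  define W where "W = a^2/c + b^2/d"
  have "q*W = q*(a^2*d + b^2*c)/(c*d)" unfolding W_def using c0 d0 by (simp add: field_simps)
  also have "\<dots> = S" using det c0 d0 by (simp add: field_simps)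
  finally have SW: "S = q*W" by simp
  have Wpos: "W > 0" using S(1) q(1) SW by (simp add: zero_less_mult_iff)
  have CI': "W^2 < S*(R + 2*W)"
  proof -
    have "a^2 = 1/4 - c^2" "b^2 = 1/4 - d^2" using ac bd by linarith+
    moreover have "a^2 \<ge> 0" "b^2 \<ge> 0" by simp_all
    ultimately have "W^2 < (1 - c - d)*(R + 2*W)"
      using CI[of c d "a^2" "b^2"] c0 d0 Wpos unfolding W_def R_def by blast
    then show ?thesis using S(2) by simp
  qed
  have key: "(1-2*q)*S < q^2*R"
  proof -
    have "W*W < W*(q*(R+2*W))" using CI' SW by (simp add: power2_eq_square algebra_simps)
    then have "W < q*(R + 2*W)" using Wpos by simp
    then have "(1-2*q)*W < q*R" by (simp add: algebra_simps)
    then have "q*((1-2*q)*W) < q*(q*R)" using q by simp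
    then show ?thesis by (simp add: SW power2_eq_square algebra_simps)
  qed
  have Q: "S*(c*k1^2 + d*k2^2) = q*t^2"
  proof -
    have "S*(c*k1^2 + d*k2^2) = (S*c*k1)*k1 + (S*d*k2)*k2" by (simp add: algebra_simps power2_eq_square)
    also have "\<dots> = q*t*(a*k1 + b*k2)" by (simp only: ker1 ker2) (simp add: algebra_simps)
    finally show ?thesis using tdef by (simp add: power2_eq_square)
  qed
  have cubes: "S^2*(a*k1^3 + b*k2^3) = q^3*t^3*R/S"
    unfolding R_def using S(1) c0 d0
    by (simp add: k1e k2e field_simps power2_eq_square power3_eq_cube)
  have m3: "3*q*S*t*(c*k1^2 + d*k2^2) = 3*q*t*(S*(c*k1^2 + d*k2^2))" by (simp add: algebra_simps)
  have "(q*(1+q)*t^3 - 3*q*S*t*(c*k1^2 + d*k2^2) - S^2*(a*k1^3 + b*k2^3)) * S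
      = (q*(1+q)*t^3 - 3*q*t*(q*t^2) - q^3*t^3*R/S) * S"
    unfolding m3 Q cubes by simp
  also have "\<dots> = t^3 * q * ((1-2*q)*S - q^2*R)"
    using S(1) by (simp add: field_simps power2_eq_square power3_eq_cube)
  finally have Z: "(q*(1+q)*t^3 - 3*q*S*t*(c*k1^2 + d*k2^2) - S^2*(a*k1^3 + b*k2^3)) * S
      = t^3 * q * ((1-2*q)*S - q^2*R)" .
  have "t^3 * q * ((1-2*q)*S - q^2*R) \<noteq> 0" using t0 q key by simp
  then show ?thesis using Z by auto
qed

lemma BRIDGE:
  fixes p S P1 P2 P3 a b c d k1 k2 t :: real
  assumes p: "1/2 < p" "p < 1" and S: "S > 0" "S = 1 - c - d"
    and P: "P3 > 0" "P2 = S*P3" "P1 = S*P2"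
    and ac: "a^2 + c^2 = 1/4" and bd: "b^2 + d^2 = 1/4"
    and nK: "\<not> (c = 0 \<and> d = 0)" and k: "k1^2 + k2^2 = 1"
    and tdef: "t = a*k1 + b*k2"
    and K1: "p*(p-1)*P2*a*t + p*P1*c*k1 = 0" and K2: "p*(p-1)*P2*b*t + p*P1*d*k2 = 0"
    and D: "(p*(p-1)*P2*a*a + p*P1*c)*(p*(p-1)*P2*b*b + p*P1*d) - (p*(p-1)*P2*a*b)*(p*(p-1)*P2*a*b) = 0"
  shows "p*(p-1)*(p-2)*P3*t^3 + 3*p*(p-1)*P2*t*(c*k1^2 + d*k2^2) - p*P1*(a*k1^3 + b*k2^3) \<noteq> 0"
proof -
  define q where "q = 1 - p"
  have q: "0 < q" "q < 1/2" using p unfolding q_def by simp_all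
  have P2pos: "P2 > 0" using P S by simp
  have pP2: "p*P2 \<noteq> 0" using P2pos p by simp
  have "p*(p-1)*P2*a*t + p*P1*c*k1 = (p*P2)*(S*c*k1 - q*t*a)"
    unfolding q_def P(3) by (simp add: algebra_simps)
  then have ker1: "S*c*k1 = q*t*a" using K1 pP2 by simp
  have "p*(p-1)*P2*b*t + p*P1*d*k2 = (p*P2)*(S*d*k2 - q*t*b)"
    unfolding q_def P(3) by (simp add: algebra_simps)
  then have ker2: "S*d*k2 = q*t*b" using K2 pP2 by simp
  have "(p*(p-1)*P2*a*a + p*P1*c)*(p*(p-1)*P2*b*b + p*P1*d) - (p*(p-1)*P2*a*b)*(p*(p-1)*P2*a*b)
      = ((p*P2)*(p*P2)*S) * (S*c*d - q*(a^2*d + b^2*c))"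
    unfolding q_def P(3) by (simp add: algebra_simps power2_eq_square)
  then have det: "S*c*d = q*(a^2*d + b^2*c)" using D pP2 S(1) by simp
  have Z: "q*(1+q)*t^3 - 3*q*S*t*(c*k1^2 + d*k2^2) - S^2*(a*k1^3 + b*k2^3) \<noteq> 0"
    by (rule ALG1[OF q S ac bd nK k ker1 ker2 det tdef])
  have "p*(p-1)*(p-2)*P3*t^3 + 3*p*(p-1)*P2*t*(c*k1^2 + d*k2^2) - p*P1*(a*k1^3 + b*k2^3)
      = (p*P3) * (q*(1+q)*t^3 - 3*q*S*t*(c*k1^2 + d*k2^2) - S^2*(a*k1^3 + b*k2^3))"
    unfolding q_def P(3) P(2) by (simp add: algebra_simps power2_eq_square)
  moreover have "p*P3 \<noteq> 0" using p P by simp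
  ultimately show ?thesis using Z by simp
qed

lemma ALG2:
  fixes p P1 P2 P3 a b c d k1 k2 t :: real
  assumes cd: "c = 0" "d = 0" and ab: "a^2 = 1/4" "b^2 = 1/4"
    and p: "p \<noteq> 0" "p \<noteq> 1" and P2: "P2 \<noteq> 0"
    and tdef: "t = a*k1 + b*k2"
    and K1: "p*(p-1)*P2*a*t + p*P1*c*k1 = 0"
  shows "p*(p-1)*(p-2)*P3*t^3 + 3*p*(p-1)*P2*t*(c*k1^2 + d*k2^2) - p*P1*(a*k1^3 + b*k2^3) = 0"
    and "(p*(p-1)*P2*a*a + p*P1*c)*(p*(p-1)*P2*b*b + p*P1*d) - (p*(p-1)*P2*a*b)*(p*(p-1)*P2*a*b) = 0"
proof -
  have a0: "a \<noteq> 0" using ab by auto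
  have "p*(p-1)*P2*a*t = 0" using K1 cd by simp
  then have t0: "t = 0" using p P2 a0 by simp
  then have e: "a*k1 = -(b*k2)" using tdef by simp
  have "a*k1*(a*k1)*(a*k1) = -(b*k2*(b*k2)*(b*k2))" using e by simp
  then have "a^2*(a*k1^3) = -(b^2*(b*k2^3))" by (simp add: power2_eq_square power3_eq_cube algebra_simps)
  then have "a*k1^3 + b*k2^3 = 0" using ab by simp
  then show "p*(p-1)*(p-2)*P3*t^3 + 3*p*(p-1)*P2*t*(c*k1^2 + d*k2^2) - p*P1*(a*k1^3 + b*k2^3) = 0"
    using t0 by simp
  show "(p*(p-1)*P2*a*a + p*P1*c)*(p*(p-1)*P2*b*b + p*P1*d) - (p*(p-1)*P2*a*b)*(p*(p-1)*P2*a*b) = 0"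
    using cd by (simp add: algebra_simps)
qed

lemma cos0_pi:
  fixes x :: real
  assumes "cos x = 0" "-pi \<le> x" "x \<le> pi"
  shows "x = pi/2 \<or> x = -pi/2"
proof -
  obtain n :: int where n: "x = n*pi + pi/2" using assms(1) cos_zero_iff_int2 by blast
  have "-pi \<le> n*pi + pi/2" "n*pi + pi/2 \<le> pi" using assms n by simp_all
  then have h1: "(-3/2)*pi \<le> real_of_int n*pi" and h2: "real_of_int n*pi \<le> (1/2)*pi" by linarith+
  have "-3/2 \<le> real_of_int n" using h1 mult_le_cancel_right_pos[of pi "-3/2" "real_of_int n"] pi_gt_zero by simp
  moreover have "real_of_int n \<le> 1/2" using h2 mult_le_cancel_right_pos[of pi "real_of_int n" "1/2"] pi_gt_zero by simp
  ultimately have "-3/2 \<le> real_of_int n" "real_of_int n \<le> 1/2" by simp_all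
  then have "n \<ge> -1" "n \<le> 0" by linarith+
  then have "n = -1 \<or> n = 0" by linarith
  then show ?thesis using n by auto
qed

lemma cos1_pi:
  fixes x :: real
  assumes "cos x = 1" "-pi \<le> x" "x \<le> pi"
  shows "x = 0"
proof -
  have "sin x = 0" using assms(1) sin_cos_squared_add[of x] by simp
  moreover have "x \<noteq> pi" "x \<noteq> -pi" using assms(1) by auto
  ultimately show ?thesis using sin_eq_0_pi assms(2,3) by force
qed

lemma pm_facts:
  fixes z :: real
  assumes "z = pi/2 \<or> z = -pi/2"
  shows "cos z = 0" "(sin z / 2)^2 = 1/4" "-pi \<le> z" "z \<le> pi" "z \<noteq> 0"
proof -
  have pi: "pi > 0" by simp
  from assms show "cos z = 0"
  proof
    assume h: "z = pi/2" show ?thesis unfolding h by simp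
  next
    assume h: "z = -pi/2" show ?thesis unfolding h by simp
  qed
  from assms show "(sin z / 2)^2 = 1/4"
  proof
    assume h: "z = pi/2" show ?thesis unfolding h by (simp add: power_divide)
  next
    assume h: "z = -pi/2" show ?thesis unfolding h by (simp add: power_divide)
  qed
  show "-pi \<le> z" using assms pi by (elim disjE) linarith+
  show "z \<le> pi" using assms pi by (elim disjE) linarith+
  show "z \<noteq> 0" using assms pi by (elim disjE) linarith+
qed

theorem lemma5p4:
  fixes \<alpha> :: real
  assumes "1 < \<alpha>" and "\<alpha> < 2"
  shows "(\<forall>\<xi> \<in> E \<alpha> - K3. \<forall>k. unit_kernel \<alpha> \<xi> k \<longrightarrow> d3_dir \<alpha> k \<xi> \<noteq> 0)
       \<and> (\<forall>P \<in> K3. P \<in> E \<alpha> \<and> (\<forall>k. unit_kernel \<alpha> P k \<longrightarrow> d3_dir \<alpha> k P = 0))"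
proof -
  define p where "p = \<alpha> / 2"
  have p: "1/2 < p" "p < 1" using assms unfolding p_def by simp_all
  have powr_rel: "sS \<xi> powr (p - 2) = sS \<xi> * sS \<xi> powr (p - 3)"
    "sS \<xi> powr (p - 1) = sS \<xi> * sS \<xi> powr (p - 2)" if "sS \<xi> > 0" for \<xi>
  proof -
    have "sS \<xi> powr (p - 2) = sS \<xi> powr ((p - 3) + 1)" by simp
    also have "\<dots> = sS \<xi> * sS \<xi> powr (p - 3)" using that powr_add[of "sS \<xi>" "p - 3" 1] by simp
    finally show "sS \<xi> powr (p - 2) = sS \<xi> * sS \<xi> powr (p - 3)" .
    have "sS \<xi> powr (p - 1) = sS \<xi> powr ((p - 2) + 1)" by simp
    also have "\<dots> = sS \<xi> * sS \<xi> powr (p - 2)" using that powr_add[of "sS \<xi>" "p - 2" 1] by simp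
    finally show "sS \<xi> powr (p - 1) = sS \<xi> * sS \<xi> powr (p - 2)" .
  qed
  have normk: "fst k ^ 2 + snd k ^ 2 = 1" if "unit_kernel \<alpha> \<xi> k" for \<xi> k
  proof -
    have "norm k = 1" using that unfolding unit_kernel_def by simp
    then have "sqrt ((fst k)^2 + (snd k)^2) = 1" by (cases k) (simp add: norm_Pair)
    then show ?thesis by simp
  qed
  have trig: "(sin z / 2)^2 + (cos z / 2)^2 = 1/4" for z :: real
    using sin_cos_squared_add[of z] by (simp add: power_divide)
  have part1: "\<forall>\<xi> \<in> E \<alpha> - K3. \<forall>k. unit_kernel \<alpha> \<xi> k \<longrightarrow> d3_dir \<alpha> k \<xi> \<noteq> 0"
  proof (intro ballI allI impI)
    fix \<xi> k
    assume \<xi>: "\<xi> \<in> E \<alpha> - K3" and uk: "unit_kernel \<alpha> \<xi> k"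
    have inT: "-pi \<le> fst \<xi>" "fst \<xi> \<le> pi" "-pi \<le> snd \<xi>" "snd \<xi> \<le> pi"
      and n0: "\<xi> \<noteq> (0, 0)" and det0: "det_hess \<alpha> \<xi> = 0" and nK3: "\<xi> \<notin> K3"
      using \<xi> unfolding E_def M_def T2_def by auto
    have Spos: "sS \<xi> > 0"
    proof (rule ccontr)
      assume "\<not> sS \<xi> > 0"
      then have "cos (fst \<xi>) + cos (snd \<xi>) \<ge> 2" unfolding sS_def by simp
      moreover have "cos (fst \<xi>) \<le> 1" "cos (snd \<xi>) \<le> 1" by simp_all
      ultimately have "cos (fst \<xi>) = 1" "cos (snd \<xi>) = 1" by linarith+
      then have "fst \<xi> = 0" "snd \<xi> = 0" using cos1_pi inT by blast+
      then show False using n0 by (cases \<xi>) simp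
    qed
    have nK: "\<not> (cos (fst \<xi>) / 2 = 0 \<and> cos (snd \<xi>) / 2 = 0)"
    proof
      assume "cos (fst \<xi>) / 2 = 0 \<and> cos (snd \<xi>) / 2 = 0"
      then have "fst \<xi> = pi/2 \<or> fst \<xi> = -pi/2" "snd \<xi> = pi/2 \<or> snd \<xi> = -pi/2"
        using cos0_pi inT by auto
      then have "\<xi> \<in> K3" unfolding K3_def by (cases \<xi>) auto
      then show False using nK3 by simp
    qed
    have S: "sS \<xi> = 1 - cos (fst \<xi>) / 2 - cos (snd \<xi>) / 2" unfolding sS_def by (simp add: field_simps)
    have P3: "sS \<xi> powr (p - 3) > 0" using Spos by simp
    have K1: "(\<Sum>j\<in>{1,2}. hess \<alpha> \<xi> 1 j * comp k j) = 0" using uk unfolding unit_kernel_def by simp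
    have K2: "(\<Sum>j\<in>{1,2}. hess \<alpha> \<xi> 2 j * comp k j) = 0" using uk unfolding unit_kernel_def by simp
    note C = compact(1)[OF Spos, where \<alpha>=\<alpha> and k=k, folded p_def]
      compact(2)[OF Spos, where \<alpha>=\<alpha> and k=k, folded p_def]
      compact(3)[OF Spos, where \<alpha>=\<alpha>, folded p_def]
      compact(4)[OF Spos, where \<alpha>=\<alpha> and k=k, folded p_def]
    show "d3_dir \<alpha> k \<xi> \<noteq> 0"
      unfolding C(4)
      by (rule BRIDGE[OF p Spos S P3 powr_rel[OF Spos] trig trig nK normk[OF uk] refl])
         (use K1 K2 det0 C in simp_all)
  qed
  have part2: "\<forall>P \<in> K3. P \<in> E \<alpha> \<and> (\<forall>k. unit_kernel \<alpha> P k \<longrightarrow> d3_dir \<alpha> k P = 0)"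
  proof
    fix P assume P: "P \<in> K3"
    then obtain x y where xy: "P = (x, y)" "x = pi/2 \<or> x = -pi/2" "y = pi/2 \<or> y = -pi/2"
      unfolding K3_def by auto
    note fx = pm_facts[OF xy(2)] and fy = pm_facts[OF xy(3)]
    have cx: "cos x = 0" "cos y = 0" using fx fy by simp_all
    have sx: "(sin x / 2)^2 = 1/4" "(sin y / 2)^2 = 1/4" using fx fy by simp_all
    have Spos: "sS P > 0" unfolding sS_def xy(1) using cx by simp
    have P2: "sS P powr (p - 2) \<noteq> 0" using Spos by simp
    have p0: "p \<noteq> 0" "p \<noteq> 1" using p by auto
    note C3 = compact(3)[OF Spos, where \<alpha>=\<alpha>, folded p_def]
    have inM: "P \<in> M" unfolding M_def T2_def xy(1) using fx fy by simp
    have "det_hess \<alpha> P = 0"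
      unfolding C3 using cx xy(1) by (simp add: algebra_simps)
    then have "P \<in> E \<alpha>" using inM unfolding E_def by simp
    moreover have "d3_dir \<alpha> k P = 0" if uk: "unit_kernel \<alpha> P k" for k
    proof -
      have K1: "(\<Sum>j\<in>{1,2}. hess \<alpha> P 1 j * comp k j) = 0" using uk unfolding unit_kernel_def by simp
      note C = compact(1)[OF Spos, where \<alpha>=\<alpha> and k=k, folded p_def]
        compact(4)[OF Spos, where \<alpha>=\<alpha> and k=k, folded p_def]
      show ?thesis
        unfolding C(2)
        by (rule ALG2(1)) (use cx sx xy p0 P2 K1 C(1) in simp_all)
    qed
    ultimately show "P \<in> E \<alpha> \<and> (\<forall>k. unit_kernel \<alpha> P k \<longrightarrow> d3_dir \<alpha> k P = 0)" by blast
  qed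
  show ?thesis using part1 part2 by blast
qed

end
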